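(* Let $(M,g,S)$, $p$, $u$ and $\varphi$ be as in the context, and let $\alpha_1$ be the subspace of $T_pM$ spanned by $u,Su,S^2u$. Then the vectors $$e_1=u,\qquad e_2=\frac{(-\cos\varphi)u+Su-(\cos\varphi)S^2u}{\sqrt{1-2\cos^2\varphi}},\qquad e_3=S^2u$$ form an orthonormal basis of $\alpha_1$ with respect to $g$.
   Context: $M$ is a 4-dimensional differentiable manifold with a positive definite metric $g$ and a tensor field $S$ of type $(1,1)$ whose components in some local coordinate system form the matrix with rows $(0,1,0,0)$, $(0,0,1,0)$, $(0,0,0,1)$, $(-1,0,0,0)$; hence $S^4=-\mathrm{id}$, and $g(Su,Sv)=g(u,v)$ for all vector fields $u,v$. Here $p\in M$ and $u\in T_pM$ is a unit vector (w.r.t. $g$) inducing an $S$-basis, i.e. $\{u,Su,S^2u,S^3u\}$ is a basis of $T_pM$, and $\varphi=\angle(u,Su)$ is the $g$-angle, so $\cos\varphi=g(u,Su)$. It is known that then $\angle(u,Su)=\angle(Su,S^2u)=\angle(S^2u,S^3u)=\pi-\angle(S^3u,u)$, $\angle(u,S^2u)=\angle(Su,S^3u)=\frac{\pi}{2}$, and $\frac{\pi}{4}<\varphi<\frac{3\pi}{4}$. *)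

theory Defs
  imports "HOL-Analysis.Analysis"
begin

text \<open>The tangent space T_pM is modelled in the given local coordinates as real^4.
  The structure tensor S at p has the coordinate matrix with rows
  (0,1,0,0), (0,0,1,0), (0,0,0,1), (-1,0,0,0).\<close>

definition S_mat :: "real^4^4" where
  "S_mat = vector [vector [0,1,0,0], vector [0,0,1,0], vector [0,0,0,1], vector [-1,0,0,0]]"

definition S_op :: "real^4 \<Rightarrow> real^4" where
  "S_op x = S_mat *v x"

definition pos_def_metric :: "(real^4 \<Rightarrow> real^4 \<Rightarrow> real) \<Rightarrow> bool" where
  "pos_def_metric g \<longleftrightarrow> bilinear g \<and> (\<forall>x y. g x y = g y x) \<and> (\<forall>x. x \<noteq> 0 \<longrightarrow> g x x > 0)"

definition g_angle :: "(real^4 \<Rightarrow> real^4 \<Rightarrow> real) \<Rightarrow> real^4 \<Rightarrow> real^4 \<Rightarrow> real" where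
  "g_angle g x y = arccos (g x y / (sqrt (g x x) * sqrt (g y y)))"

end

theory Submission
  imports Defs
begin

lemma vector_4:
 "(vector [x,y,z,w] ::('a::zero)^4)$1 = x"
 "(vector [x,y,z,w] ::('a::zero)^4)$2 = y"
 "(vector [x,y,z,w] ::('a::zero)^4)$3 = z"
 "(vector [x,y,z,w] ::('a::zero)^4)$4 = w"
  unfolding vector_def by simp_all

lemma S4: "S_op (S_op (S_op (S_op x))) = - x"
  unfolding S_op_def S_mat_def
  by (simp add: vec_eq_iff matrix_vector_mult_def forall_4 sum_4 vector_4)

theorem lemma4p1:
  fixes g :: "real^4 \<Rightarrow> real^4 \<Rightarrow> real" and u :: "real^4" and \<phi> :: real
  assumes metric: "pos_def_metric g"
    and compat: "\<And>x y. g (S_op x) (S_op y) = g x y"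
    and unit: "g u u = 1"
    and basis: "card {u, S_op u, S_op (S_op u), S_op (S_op (S_op u))} = 4"
       "independent {u, S_op u, S_op (S_op u), S_op (S_op (S_op u))}"
       "span {u, S_op u, S_op (S_op u), S_op (S_op (S_op u))} = UNIV"
    and phi: "\<phi> = g_angle g u (S_op u)"
  defines "e1 \<equiv> u"
    and "e2 \<equiv> (1 / sqrt (1 - 2 * (cos \<phi>)\<^sup>2)) *\<^sub>R
               ((- cos \<phi>) *\<^sub>R u + S_op u - (cos \<phi>) *\<^sub>R S_op (S_op u))"
    and "e3 \<equiv> S_op (S_op u)"
  shows "g e1 e1 = 1 \<and> g e2 e2 = 1 \<and> g e3 e3 = 1 \<and>
         g e1 e2 = 0 \<and> g e1 e3 = 0 \<and> g e2 e3 = 0 \<and>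
         span {e1, e2, e3} = span {u, S_op u, S_op (S_op u)}"
proof -
  have bl: "bilinear g" and sym: "\<And>x y. g x y = g y x" and pd: "\<And>x. x \<noteq> 0 \<Longrightarrow> g x x > 0"
    using metric unfolding pos_def_metric_def by auto
  note bs = bilinear_ladd[OF bl] bilinear_radd[OF bl] bilinear_lmul[OF bl] bilinear_rmul[OF bl]
    bilinear_lsub[OF bl] bilinear_rsub[OF bl] bilinear_lneg[OF bl] bilinear_rneg[OF bl]
  define a where "a = S_op u"
  define b where "b = S_op a"
  define x where "x = g u a"
  have aa: "g a a = 1" using compat unit a_def by simp
  have bb: "g b b = 1" using compat aa b_def by simp
  have ab: "g a b = x" using compat x_def a_def b_def by simp
  have ub: "g u b = 0"
  proof -
    have "g u b = g b (S_op (S_op b))" using compat b_def a_def by simp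
    also have "S_op (S_op b) = - u" using S4 b_def a_def by simp
    finally have "g u b = - g b u" using bs by simp
    thus ?thesis using sym[of u b] by simp
  qed
  define w where "w = (- x) *\<^sub>R u + a - x *\<^sub>R b"
  have ww: "g w w = 1 - 2 * x^2"
    unfolding w_def using unit aa bb ab ub sym[of a u] sym[of b u] sym[of b a] x_def
    by (simp add: bs algebra_simps power2_eq_square)
  have uw: "g u w = 0" unfolding w_def using unit ub x_def by (simp add: bs)
  have bw: "g b w = 0" unfolding w_def using bb ab ub sym[of b u] sym[of b a]
    by (simp add: bs)
  have wnz: "w \<noteq> 0"
  proof
    assume "w = 0"
    hence aeq: "a = x *\<^sub>R u + x *\<^sub>R b" unfolding w_def by (simp add: algebra_simps)
    let ?s = "{u, S_op u, S_op (S_op u), S_op (S_op (S_op u))}"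
    have dist: "a \<noteq> u" "a \<noteq> b" "a \<noteq> S_op b" using basis(1) a_def b_def
      by (auto simp: card_insert_if split: if_splits)
    have "x *\<^sub>R u + x *\<^sub>R b \<in> span (?s - {a})"
      using dist a_def b_def
      by (intro span_add span_mul span_base) auto
    hence "a \<in> span (?s - {a})" using aeq by simp
    moreover have "a \<in> ?s" using a_def by simp
    ultimately have "dependent ?s" unfolding dependent_def by blast
    thus False using basis(2) by simp
  qed
  have pos: "1 - 2 * x^2 > 0" using pd[OF wnz] ww by simp
  have xb: "\<bar>x\<bar> \<le> 1" using pos abs_square_le_1[of x] by simp
  have cphi: "cos \<phi> = x" unfolding phi g_angle_def using unit aa xb x_def a_def
    by (simp add: cos_arccos_abs)
  define r where "r = sqrt (1 - 2 * x^2)"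
  have r0: "r > 0" unfolding r_def using pos by simp
  have e2w: "e2 = (1/r) *\<^sub>R w" unfolding e2_def w_def r_def cphi a_def b_def by simp
  have e3b: "e3 = b" unfolding e3_def b_def a_def by simp
  have "g e2 e2 = (1/r)^2 * g w w" unfolding e2w by (simp add: bs power2_eq_square)
  also have "\<dots> = 1" using ww r0 pos unfolding r_def by (simp add: power_divide)
  finally have e22: "g e2 e2 = 1" .
  have e12: "g e1 e2 = 0" unfolding e2w e1_def by (simp add: bs uw)
  have e23: "g e2 e3 = 0" unfolding e2w e3b using bw sym[of w b] by (simp add: bs)
  have sp: "span {e1, e2, e3} = span {u, S_op u, S_op (S_op u)}"
  unfolding span_eq
  proof (intro conjI)
    show "{e1, e2, e3} \<subseteq> span {u, S_op u, S_op (S_op u)}"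
    proof -
      let ?T = "{u, S_op u, S_op (S_op u)}"
      have "w \<in> span ?T" unfolding w_def a_def b_def
        by (intro span_add span_diff span_scale span_base) auto
      hence "e2 \<in> span ?T" unfolding e2w by (rule span_scale)
      moreover have "e1 \<in> span ?T" "e3 \<in> span ?T" unfolding e1_def e3b b_def a_def
        by (auto intro: span_base)
      ultimately show ?thesis by auto
    qed
    have "a = r *\<^sub>R e2 + x *\<^sub>R e1 + x *\<^sub>R e3"
      unfolding e2w e1_def e3b w_def using r0 by (simp add: algebra_simps)
    hence "a \<in> span {e1, e2, e3}"
      by (metis span_add span_mul span_base insertI1 insertI2)
    thus "{u, S_op u, S_op (S_op u)} \<subseteq> span {e1, e2, e3}"
      unfolding a_def[symmetric] b_def[symmetric] using e1_def e3b
      by (auto intro: span_base)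
  qed
  show ?thesis using unit e22 bb e12 ub e23 sp unfolding e1_def e3b by simp
qed

end
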